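(* Let $G$ be a finite group with $|G|\ge4$, $\sigma$ an automorphism of $G$ of order two, and $S$ a symmetric subset of $G$. Let $X$ be one of $C_\Sigma(G,S)$, $C(G,S)^\sigma$, $C_\Sigma(G,S)^\sigma$, and suppose $X$ is undirected. Then $X$ is connected if and only if $S$ generates $G$.
   Context: $C_\Sigma(G,S)$ has vertex set $G$ and an edge from $x$ to $x^{-1}s$ for each $s\in S$; $C(G,S)^\sigma$ has an edge from $x$ to $\sigma(xs)$; $C_\Sigma(G,S)^\sigma$ has an edge from $x$ to $\sigma(x^{-1}s)$. A graph is undirected if its adjacency matrix is symmetric. *)

theory Defs
  imports "HOL-Algebra.Generated_Groups"
begin

text \<open>A (multi)digraph on a vertex set, given by an edge function f:
  each vertex x has, for every s in S, one edge from x to f x s.\<close>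

definition adj_count :: "('a \<Rightarrow> 'a \<Rightarrow> 'a) \<Rightarrow> 'a set \<Rightarrow> 'a \<Rightarrow> 'a \<Rightarrow> nat" where
  "adj_count f S x y = card {s \<in> S. f x s = y}"

definition undirected_graph :: "('a \<Rightarrow> 'a \<Rightarrow> 'a) \<Rightarrow> 'a set \<Rightarrow> 'a set \<Rightarrow> bool" where
  "undirected_graph f S V \<longleftrightarrow> (\<forall>x\<in>V. \<forall>y\<in>V. adj_count f S x y = adj_count f S y x)"

definition edge_rel :: "('a \<Rightarrow> 'a \<Rightarrow> 'a) \<Rightarrow> 'a set \<Rightarrow> 'a set \<Rightarrow> ('a \<times> 'a) set" where
  "edge_rel f S V = {(x, y). x \<in> V \<and> y \<in> V \<and> adj_count f S x y > 0}"

definition connected_graph :: "('a \<Rightarrow> 'a \<Rightarrow> 'a) \<Rightarrow> 'a set \<Rightarrow> 'a set \<Rightarrow> bool" where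
  "connected_graph f S V \<longleftrightarrow> (\<forall>x\<in>V. \<forall>y\<in>V. (x, y) \<in> (edge_rel f S V)\<^sup>*)"

text \<open>Edge functions: C_Sigma(G,S): x -> x^{-1}s; C(G,S)^sigma: x -> sigma(xs);
  C_Sigma(G,S)^sigma: x -> sigma(x^{-1}s).\<close>

definition cay_sum :: "('a, 'b) monoid_scheme \<Rightarrow> 'a \<Rightarrow> 'a \<Rightarrow> 'a" where
  "cay_sum G x s = inv\<^bsub>G\<^esub> x \<otimes>\<^bsub>G\<^esub> s"

definition cay_twist :: "('a, 'b) monoid_scheme \<Rightarrow> ('a \<Rightarrow> 'a) \<Rightarrow> 'a \<Rightarrow> 'a \<Rightarrow> 'a" where
  "cay_twist G \<sigma> x s = \<sigma> (x \<otimes>\<^bsub>G\<^esub> s)"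

definition cay_sum_twist :: "('a, 'b) monoid_scheme \<Rightarrow> ('a \<Rightarrow> 'a) \<Rightarrow> 'a \<Rightarrow> 'a \<Rightarrow> 'a" where
  "cay_sum_twist G \<sigma> x s = \<sigma> (inv\<^bsub>G\<^esub> x \<otimes>\<^bsub>G\<^esub> s)"

end

theory Submission
  imports Defs
begin

inductive_set words :: "('a, 'b) monoid_scheme \<Rightarrow> 'a set \<Rightarrow> 'a set" for G S where
  w_one: "\<one>\<^bsub>G\<^esub> \<in> words G S"
| w_step: "g \<in> words G S \<Longrightarrow> s \<in> S \<Longrightarrow> g \<otimes>\<^bsub>G\<^esub> s \<in> words G S"

lemma words_carrier:
  assumes "group G" "S \<subseteq> carrier G" "g \<in> words G S" shows "g \<in> carrier G"
  using assms(3) apply induct using assms group.is_monoid by (auto intro: monoid.m_closed monoid.one_closed)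

lemma words_mult:
  assumes "group G" "S \<subseteq> carrier G" "h \<in> words G S" "g \<in> words G S"
  shows "g \<otimes>\<^bsub>G\<^esub> h \<in> words G S"
  using assms(3)
proof induct
  case w_one
  have "g \<in> carrier G" using words_carrier[OF assms(1,2,4)] .
  then have "g \<otimes>\<^bsub>G\<^esub> \<one>\<^bsub>G\<^esub> = g" using monoid.r_one[OF group.is_monoid[OF assms(1)]] by blast
  then show ?case using assms(4) by simp
next
  case (w_step h s)
  have gc: "g \<in> carrier G" using words_carrier[OF assms(1,2,4)] .
  have hc: "h \<in> carrier G" using words_carrier[OF assms(1,2) w_step(1)] .
  have sc: "s \<in> carrier G" using w_step(3) assms(2) by blast
  have eq: "g \<otimes>\<^bsub>G\<^esub> h \<otimes>\<^bsub>G\<^esub> s = g \<otimes>\<^bsub>G\<^esub> (h \<otimes>\<^bsub>G\<^esub> s)"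
    using monoid.m_assoc[OF group.is_monoid[OF assms(1)] gc hc sc] .
  have "g \<otimes>\<^bsub>G\<^esub> h \<otimes>\<^bsub>G\<^esub> s \<in> words G S" using words.w_step[OF w_step(2) w_step(3)] .
  then show ?case using eq by simp
qed

lemma words_inv:
  assumes "group G" "S \<subseteq> carrier G" "\<forall>s\<in>S. inv\<^bsub>G\<^esub> s \<in> S" "g \<in> words G S"
  shows "inv\<^bsub>G\<^esub> g \<in> words G S"
  using assms(4)
proof induct
  case w_one then show ?case using assms(1) by (simp add: group.is_monoid monoid.inv_one words.w_one)
next
  case (w_step g s)
  have gc: "g \<in> carrier G" using words_carrier[OF assms(1,2) w_step(1)] .
  have sc: "s \<in> carrier G" using w_step assms(2) by auto
  have "inv\<^bsub>G\<^esub> (g \<otimes>\<^bsub>G\<^esub> s) = inv\<^bsub>G\<^esub> s \<otimes>\<^bsub>G\<^esub> inv\<^bsub>G\<^esub> g"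
    using group.inv_mult_group[OF assms(1) gc sc] .
  moreover have "inv\<^bsub>G\<^esub> s \<in> words G S"
  proof -
    have "\<one>\<^bsub>G\<^esub> \<otimes>\<^bsub>G\<^esub> inv\<^bsub>G\<^esub> s \<in> words G S" using w_step assms(3) by (blast intro: words.intros)
    then show ?thesis using assms(1) sc by (simp add: group.inv_closed group.is_monoid monoid.l_one)
  qed
  ultimately show ?case using words_mult[OF assms(1,2) w_step(2)] by metis
qed

lemma gen_words:
  assumes "group G" "S \<subseteq> carrier G" "\<forall>s\<in>S. inv\<^bsub>G\<^esub> s \<in> S"
  shows "generate G S \<subseteq> words G S"
proof -
  have "subgroup (words G S) G"
    apply (rule subgroup.intro)
    using words_carrier[OF assms(1,2)] words_mult[OF assms(1,2)] words_inv[OF assms] w_one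
    by auto
  moreover have "S \<subseteq> words G S"
  proof
    fix s assume "s \<in> S"
    then have "\<one>\<^bsub>G\<^esub> \<otimes>\<^bsub>G\<^esub> s \<in> words G S" by (blast intro: words.intros)
    then show "s \<in> words G S" using assms \<open>s \<in> S\<close> by (auto simp: group.is_monoid monoid.l_one)
  qed
  ultimately show ?thesis using group.generate_subgroup_incl[OF assms(1)] by blast
qed

lemma edge_rel_iff:
  assumes "finite S"
  shows "(x, y) \<in> edge_rel X S V \<longleftrightarrow> x \<in> V \<and> y \<in> V \<and> (\<exists>s\<in>S. X x s = y)"
proof -
  have "card {s \<in> S. X x s = y} > 0 \<longleftrightarrow> (\<exists>s\<in>S. X x s = y)"
    using assms by (auto simp: card_gt_0_iff)
  then show ?thesis by (simp add: edge_rel_def adj_count_def)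
qed

lemma undir_sym:
  assumes "finite S" "undirected_graph X S V" "x \<in> V" "y \<in> V" "\<exists>s\<in>S. X x s = y"
  shows "\<exists>s\<in>S. X y s = x"
proof -
  have "adj_count X S x y > 0" using assms edge_rel_iff[of S x y X V] by (simp add: edge_rel_def)
  then have "adj_count X S y x > 0" using assms(2-4) by (simp add: undirected_graph_def)
  then show ?thesis using assms edge_rel_iff[of S y x X V] by (simp add: edge_rel_def)
qed

lemma abstract_conn:
  assumes G: "group G" and SG: "S \<subseteq> carrier G" and Sinv: "\<forall>s\<in>S. inv\<^bsub>G\<^esub> s \<in> S"
    and gen: "generate G S = carrier G"
    and sym: "\<And>x y. (x, y) \<in> T \<Longrightarrow> (y, x) \<in> T"
    and trans: "\<And>x y z. (x, y) \<in> T \<Longrightarrow> (y, z) \<in> T \<Longrightarrow> (x, z) \<in> T"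
    and two: "\<And>x s t. x \<in> carrier G \<Longrightarrow> s \<in> S \<Longrightarrow> t \<in> S \<Longrightarrow> (x, x \<otimes>\<^bsub>G\<^esub> s \<otimes>\<^bsub>G\<^esub> t) \<in> T"
    and one: "\<And>s. s \<in> S \<Longrightarrow> (\<one>\<^bsub>G\<^esub>, s) \<in> T"
    and refl: "(\<one>\<^bsub>G\<^esub>, \<one>\<^bsub>G\<^esub>) \<in> T"
  shows "\<forall>x\<in>carrier G. \<forall>y\<in>carrier G. (x, y) \<in> T"
proof -
  have W: "g \<in> words G S \<Longrightarrow> (\<one>\<^bsub>G\<^esub>, g) \<in> T \<and> (\<forall>s\<in>S. (\<one>\<^bsub>G\<^esub>, g \<otimes>\<^bsub>G\<^esub> s) \<in> T)" for g
  proof (induct rule: words.induct)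
    case w_one then show ?case using refl one G SG by (auto simp: group.is_monoid monoid.l_one subset_iff)
  next
    case (w_step g t)
    have gc: "g \<in> carrier G" using words_carrier[OF G SG w_step(1)] .
    have "(\<one>\<^bsub>G\<^esub>, g \<otimes>\<^bsub>G\<^esub> t \<otimes>\<^bsub>G\<^esub> s) \<in> T" if "s \<in> S" for s
      using trans[OF conjunct1[OF w_step(2)] two[OF gc w_step(3) that]] .
    then show ?case using w_step by blast
  qed
  show ?thesis
  proof (intro ballI)
    fix x y assume "x \<in> carrier G" "y \<in> carrier G"
    then have "x \<in> words G S" "y \<in> words G S" using gen gen_words[OF G SG Sinv] by auto
    then show "(x, y) \<in> T" using W sym trans by blast
  qed
qed

lemma sigma_gen:
  assumes G: "group G" and SG: "S \<subseteq> carrier G" and hom: "\<sigma> \<in> hom G G"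
    and sS: "\<forall>s\<in>S. \<sigma> s \<in> S" and h: "h \<in> generate G S"
  shows "\<sigma> h \<in> generate G S"
proof -
  interpret group_hom G G \<sigma> using G hom by (simp add: group_hom_def group_hom_axioms_def)
  show ?thesis using h
  proof induct
    case one then show ?case by (simp add: generate.one)
  next
    case (incl h) then show ?case using sS by (simp add: generate.incl)
  next
    case (inv h) then show ?case using sS SG by (auto simp: generate.inv)
  next
    case (eng h1 h2) then show ?case using G.generate_in_carrier[OF SG]
      by (simp add: generate.eng)
  qed
qed


theorem corollary2p7:
  fixes G :: "('a, 'b) monoid_scheme" and \<sigma> :: "'a \<Rightarrow> 'a" and S :: "'a set"
    and X :: "'a \<Rightarrow> 'a \<Rightarrow> 'a"
  assumes "group G"
    and "finite (carrier G)"
    and "card (carrier G) \<ge> 4"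
    and "\<sigma> \<in> iso G G"
    and "\<forall>x\<in>carrier G. \<sigma> (\<sigma> x) = x"
    and "\<exists>x\<in>carrier G. \<sigma> x \<noteq> x"
    and "S \<subseteq> carrier G"
    and "\<forall>s\<in>S. inv\<^bsub>G\<^esub> s \<in> S"
    and "X \<in> {cay_sum G, cay_twist G \<sigma>, cay_sum_twist G \<sigma>}"
    and "undirected_graph X S (carrier G)"
  shows "connected_graph X S (carrier G) \<longleftrightarrow> generate G S = carrier G"
proof -
  note G = assms(1) and SG = assms(7) and Sinv = assms(8) and und = assms(10)
  interpret group G by (rule G)
  have hom: "\<sigma> \<in> hom G G" using assms(4) by (simp add: iso_def)
  interpret h: group_hom G G \<sigma> using G hom by (simp add: group_hom_def group_hom_axioms_def)
  have ss: "\<And>x. x \<in> carrier G \<Longrightarrow> \<sigma> (\<sigma> x) = x" using assms(5) by auto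
  have fS: "finite S" using assms(2) SG finite_subset by blast
  let ?R = "edge_rel X S (carrier G)"
  have E: "(x, y) \<in> ?R \<longleftrightarrow> x \<in> carrier G \<and> y \<in> carrier G \<and> (\<exists>s\<in>S. X x s = y)" for x y
    using edge_rel_iff[OF fS] .
  have Esym: "\<exists>s\<in>S. X y s = x" if "x \<in> carrier G" "y \<in> carrier G" "\<exists>s\<in>S. X x s = y" for x y
    using undir_sym[OF fS und that] .
  have symR: "sym ?R" unfolding sym_def using E Esym by blast
  have Tsym: "(x, y) \<in> ?R\<^sup>* \<Longrightarrow> (y, x) \<in> ?R\<^sup>*" for x y
    using sym_rtrancl[OF symR] by (auto simp: sym_def)
  have edge: "(x, y) \<in> ?R\<^sup>*" if "x \<in> carrier G" "y \<in> carrier G" "s \<in> S" "X x s = y" for x y s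
    using E that by blast
  have redge: "(x, y) \<in> ?R\<^sup>*" if "x \<in> carrier G" "y \<in> carrier G" "s \<in> S" "X y s = x" for x y s
    using edge[OF that(2,1,3,4)] Tsym by blast
  have Sc: "s \<in> S \<Longrightarrow> s \<in> carrier G" for s using SG by auto
  have XX: "X = cay_sum G \<or> X = cay_twist G \<sigma> \<or> X = cay_sum_twist G \<sigma>" using assms(9) by auto
  have toOne: "\<exists>t\<in>S. X s t = \<one>\<^bsub>G\<^esub>" if "s \<in> S" for s
  proof -
    have sc: "s \<in> carrier G" and isS: "inv\<^bsub>G\<^esub> s \<in> S" using that Sc Sinv by auto
    show ?thesis
    proof (cases "X = cay_sum G")
      case True
      have "X s s = \<one>\<^bsub>G\<^esub>" using True sc by (simp add: cay_sum_def)
      then show ?thesis using that by blast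
    next
      case F: False
      show ?thesis
      proof (cases "X = cay_twist G \<sigma>")
        case True
        have "X s (inv\<^bsub>G\<^esub> s) = \<one>\<^bsub>G\<^esub>" using True sc by (simp add: cay_twist_def)
        then show ?thesis using isS by blast
      next
        case False
        then have "X = cay_sum_twist G \<sigma>" using XX F by auto
        then have "X s s = \<one>\<^bsub>G\<^esub>" using sc by (simp add: cay_sum_twist_def)
        then show ?thesis using that by blast
      qed
    qed
  qed
  have sigS: "\<sigma> s \<in> S" if sS: "s \<in> S" and nX: "X \<noteq> cay_sum G" for s
  proof -
    obtain t where t: "t \<in> S" "X \<one>\<^bsub>G\<^esub> t = s" using Esym[of s "\<one>\<^bsub>G\<^esub>"] toOne[OF sS] Sc[OF sS] by auto
    have tc: "t \<in> carrier G" using Sc t(1) .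
    have "X \<one>\<^bsub>G\<^esub> t = \<sigma> t" using XX nX tc by (auto simp: cay_twist_def cay_sum_twist_def)
    then have "\<sigma> t = s" using t by simp
    then have "\<sigma> s = t" using ss[OF tc] by simp
    then show ?thesis using t(1) by simp
  qed
  have one: "(\<one>\<^bsub>G\<^esub>, s) \<in> ?R\<^sup>*" if "s \<in> S" for s
    using toOne[OF that] redge[of "\<one>\<^bsub>G\<^esub>" s] Sc[OF that] by auto
  have two: "(x, x \<otimes>\<^bsub>G\<^esub> s \<otimes>\<^bsub>G\<^esub> t) \<in> ?R\<^sup>*" if x: "x \<in> carrier G" and st: "s \<in> S" "t \<in> S" for x s t
  proof -
    have sc: "s \<in> carrier G" and tc: "t \<in> carrier G" using st Sc by auto
    obtain w u v where w: "w \<in> carrier G" "u \<in> S" "v \<in> S" "X w u = x" "X w v = x \<otimes>\<^bsub>G\<^esub> s \<otimes>\<^bsub>G\<^esub> t"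
    proof (cases "X = cay_sum G")
      case True
      have iw: "inv\<^bsub>G\<^esub> (inv\<^bsub>G\<^esub> s \<otimes>\<^bsub>G\<^esub> inv\<^bsub>G\<^esub> x) = x \<otimes>\<^bsub>G\<^esub> s" using x sc by (simp add: inv_mult_group)
      show ?thesis
        apply (rule that[of "inv\<^bsub>G\<^esub> s \<otimes>\<^bsub>G\<^esub> inv\<^bsub>G\<^esub> x" "inv\<^bsub>G\<^esub> s" t])
        using True iw x sc tc st Sinv by (auto simp: cay_sum_def m_assoc)
    next
      case False
      have sS: "\<sigma> s \<in> S" "\<sigma> t \<in> S" using sigS st False by auto
      have c: "\<sigma> x \<in> carrier G" "\<sigma> s \<in> carrier G" "\<sigma> t \<in> carrier G" using x sc tc by auto
      show ?thesis
      proof (cases "X = cay_twist G \<sigma>")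
        case True
        show ?thesis
          apply (rule that[of "\<sigma> x \<otimes>\<^bsub>G\<^esub> \<sigma> s" "inv\<^bsub>G\<^esub> (\<sigma> s)" "\<sigma> t"])
          using True x sc tc c sS Sinv ss by (auto simp: cay_twist_def m_assoc)
      next
        case False2: False
        then have X3: "X = cay_sum_twist G \<sigma>" using XX False by auto
        have iw: "inv\<^bsub>G\<^esub> (inv\<^bsub>G\<^esub> (\<sigma> x \<otimes>\<^bsub>G\<^esub> \<sigma> s)) = \<sigma> x \<otimes>\<^bsub>G\<^esub> \<sigma> s" using c by simp
        show ?thesis
          apply (rule that[of "inv\<^bsub>G\<^esub> (\<sigma> x \<otimes>\<^bsub>G\<^esub> \<sigma> s)" "inv\<^bsub>G\<^esub> (\<sigma> s)" "\<sigma> t"])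
          using X3 x sc tc c sS Sinv ss by (auto simp: cay_sum_twist_def m_assoc)
      qed
    qed
    have "(x, w) \<in> ?R\<^sup>*" using redge[OF x w(1) w(2) w(4)] .
    moreover have "(w, x \<otimes>\<^bsub>G\<^esub> s \<otimes>\<^bsub>G\<^esub> t) \<in> ?R\<^sup>*" using edge[OF w(1) _ w(3) w(5)] x sc tc by auto
    ultimately show ?thesis by (rule rtrancl_trans)
  qed
  obtain x0 where x0: "x0 \<in> carrier G" "\<sigma> x0 \<noteq> x0" using assms(6) by blast
  have d1: "cay_twist G \<sigma> \<noteq> cay_sum G"
  proof
    assume "cay_twist G \<sigma> = cay_sum G"
    then have "cay_twist G \<sigma> \<one>\<^bsub>G\<^esub> x0 = cay_sum G \<one>\<^bsub>G\<^esub> x0" by simp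
    then show False using x0 by (simp add: cay_twist_def cay_sum_def)
  qed
  have d2: "cay_sum_twist G \<sigma> \<noteq> cay_sum G"
  proof
    assume "cay_sum_twist G \<sigma> = cay_sum G"
    then have "cay_sum_twist G \<sigma> \<one>\<^bsub>G\<^esub> x0 = cay_sum G \<one>\<^bsub>G\<^esub> x0" by simp
    then show False using x0 by (simp add: cay_sum_twist_def cay_sum_def)
  qed
  have closed: "X x s \<in> generate G S" if "x \<in> generate G S" "s \<in> S" for x s
  proof -
    have ix: "inv\<^bsub>G\<^esub> x \<in> generate G S" using generate_m_inv_closed[OF SG that(1)] .
    have a: "x \<otimes>\<^bsub>G\<^esub> s \<in> generate G S" "inv\<^bsub>G\<^esub> x \<otimes>\<^bsub>G\<^esub> s \<in> generate G S"
      using that ix by (auto intro: generate.eng generate.incl)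
    have b: "\<sigma> y \<in> generate G S" if "y \<in> generate G S" "X \<noteq> cay_sum G" for y
      using sigma_gen[OF G SG hom _ that(1)] sigS[OF _ that(2)] by blast
    show ?thesis using XX a b d1 d2 by (auto simp: cay_sum_def cay_twist_def cay_sum_twist_def)
  qed
  show ?thesis
  proof
    assume c: "connected_graph X S (carrier G)"
    show "generate G S = carrier G"
    proof
      show "generate G S \<subseteq> carrier G" using generate_incl[OF SG] .
      show "carrier G \<subseteq> generate G S"
      proof
        fix y assume y: "y \<in> carrier G"
        have "(\<one>\<^bsub>G\<^esub>, y) \<in> ?R\<^sup>*" using c y by (simp add: connected_graph_def)
        then show "y \<in> generate G S"
        proof induct
          case base then show ?case by (rule generate.one)
        next
          case (step a b)
          then obtain s where "s \<in> S" "X a s = b" using E by blast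
          then show ?case using closed[OF step(3)] by blast
        qed
      qed
    qed
  next
    assume gen: "generate G S = carrier G"
    have "\<forall>x\<in>carrier G. \<forall>y\<in>carrier G. (x, y) \<in> ?R\<^sup>*"
    proof (rule abstract_conn[OF G SG Sinv gen])
      show "\<And>x y. (x, y) \<in> ?R\<^sup>* \<Longrightarrow> (y, x) \<in> ?R\<^sup>*" by (rule Tsym)
      show "\<And>x y z. (x, y) \<in> ?R\<^sup>* \<Longrightarrow> (y, z) \<in> ?R\<^sup>* \<Longrightarrow> (x, z) \<in> ?R\<^sup>*" by (rule rtrancl_trans)
      show "\<And>x s t. x \<in> carrier G \<Longrightarrow> s \<in> S \<Longrightarrow> t \<in> S \<Longrightarrow> (x, x \<otimes>\<^bsub>G\<^esub> s \<otimes>\<^bsub>G\<^esub> t) \<in> ?R\<^sup>*" by (rule two)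
      show "\<And>s. s \<in> S \<Longrightarrow> (\<one>\<^bsub>G\<^esub>, s) \<in> ?R\<^sup>*" by (rule one)
      show "(\<one>\<^bsub>G\<^esub>, \<one>\<^bsub>G\<^esub>) \<in> ?R\<^sup>*" by simp
    qed
    then show "connected_graph X S (carrier G)" by (simp add: connected_graph_def)
  qed
qed

end
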